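(* Assume $W$ satisfies conditions (i), (ii) and (iv) below on $[0,T]$. Then for all $0\le t_0<t_1\le t_2<t_3\le T$, $$\lim_{n\to\infty}\sum_{j=\lfloor nt_0/2\rfloor+1}^{\lfloor nt_1/2\rfloor}\ \sum_{k=\lfloor nt_2/2\rfloor+1}^{\lfloor nt_3/2\rfloor}\Big|\beta_n(2j-1,2k-1)^2-\beta_n(2j-1,2k-2)^2-\beta_n(2j-2,2k-1)^2+\beta_n(2j-2,2k-2)^2\Big|=0.$$
   Context: $W=\{W_t,t\ge0\}$ is a centered Gaussian process with continuous covariance, and $\beta_n(j,k)=\mathbb E[(W_{(j+1)/n}-W_{j/n})(W_{(k+1)/n}-W_{k/n})]$. (The summand equals $|\langle\partial_{\frac{2j-1}{n}}^{\otimes2}-\partial_{\frac{2j-2}{n}}^{\otimes2},\partial_{\frac{2k-1}{n}}^{\otimes2}-\partial_{\frac{2k-2}{n}}^{\otimes2}\rangle_{\mathfrak H^{\otimes2}}|$ with $\partial_{j/n}=\mathbf 1_{[j/n,(j+1)/n]}$.) Conditions (constants may depend on $T$): (i) $\mathbb E[(W_t-W_{t-s})^2]\le C_1 s^{1/2}$ for $0<s\le t\le T$. (ii) There are $1<\alpha\le3/2$, $\beta=\frac32-\alpha$ such that for $s>0$, $2s\le r,t\le T$, $|t-r|\ge2s$: $|\mathbb E[(W_t-W_{t-s})(W_r-W_{r-s})]|\le C_1s^2|t-r|^{-\alpha}(t\wedge r-s)^{-\beta}+C_1s^2|t-r|^{-3/2}$. (iv) For $0<s\le t\le T-s$: $|\mathbb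 E[W_t(W_{t+s}-W_{t-s})]|\le C_3s^{1/2}$ if $t<2s$ and $\le C_3s(t-s)^{-1/2}$ if $t\ge2s$; for $0<s\le r\le T$: $|\mathbb E[W_r(W_{t+s}-W_{t-s})]|\le C_3s^{1/2}$ if $t<2s$ or $|t-r|<2s$, and $\le C_3s(t-s)^{-1/2}+C_3s|t-r|^{-1/2}$ if $t\ge2s$ and $|t-r|\ge2s$; and for $t>2s$: $|\mathbb E[W_s(W_t-W_{t-s})]|\le C_3s^{1/2+\gamma}(t-2s)^{-\gamma}$ for some $\gamma>0$. *)

theory Defs
  imports "HOL-Probability.Probability"
begin

definition gaussian_rv :: "'a measure \<Rightarrow> ('a \<Rightarrow> real) \<Rightarrow> bool" where
  "gaussian_rv M X \<longleftrightarrow> X \<in> borel_measurable M \<and>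
     ((\<exists>\<mu> \<sigma>. \<sigma> > 0 \<and> distributed M lborel X (\<lambda>x. ennreal (normal_density \<mu> \<sigma> x)))
      \<or> (\<exists>c. distr M borel X = return borel c))"

definition cov :: "'a measure \<Rightarrow> (real \<Rightarrow> 'a \<Rightarrow> real) \<Rightarrow> real \<Rightarrow> real \<Rightarrow> real" where
  "cov M W s t = integral\<^sup>L M (\<lambda>\<omega>. W s \<omega> * W t \<omega>)"

definition centered_gaussian_process :: "'a measure \<Rightarrow> (real \<Rightarrow> 'a \<Rightarrow> real) \<Rightarrow> bool" where
  "centered_gaussian_process M W \<longleftrightarrow>
     prob_space M \<and>
     (\<forall>F a. finite F \<and> F \<subseteq> {0..} \<longrightarrow> gaussian_rv M (\<lambda>\<omega>. \<Sum>t\<in>F. a t * W t \<omega>)) \<and>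
     (\<forall>t\<ge>0. integral\<^sup>L M (W t) = 0) \<and>
     continuous_on ({0..} \<times> {0..}) (\<lambda>(s, t). cov M W s t)"

definition beta_n :: "'a measure \<Rightarrow> (real \<Rightarrow> 'a \<Rightarrow> real) \<Rightarrow> nat \<Rightarrow> nat \<Rightarrow> nat \<Rightarrow> real" where
  "beta_n M W n j k = integral\<^sup>L M (\<lambda>\<omega>.
      (W ((real j + 1) / real n) \<omega> - W (real j / real n) \<omega>) *
      (W ((real k + 1) / real n) \<omega> - W (real k / real n) \<omega>))"

definition cond_i :: "'a measure \<Rightarrow> (real \<Rightarrow> 'a \<Rightarrow> real) \<Rightarrow> real \<Rightarrow> bool" where
  "cond_i M W T \<longleftrightarrow> (\<exists>C1>0. \<forall>s t. 0 < s \<and> s \<le> t \<and> t \<le> T \<longrightarrow>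
      integral\<^sup>L M (\<lambda>\<omega>. (W t \<omega> - W (t - s) \<omega>)\<^sup>2) \<le> C1 * s powr (1/2))"

definition cond_ii :: "'a measure \<Rightarrow> (real \<Rightarrow> 'a \<Rightarrow> real) \<Rightarrow> real \<Rightarrow> bool" where
  "cond_ii M W T \<longleftrightarrow> (\<exists>C1>0. \<exists>\<alpha>. 1 < \<alpha> \<and> \<alpha> \<le> 3/2 \<and>
     (\<forall>s r t. 0 < s \<and> 2 * s \<le> r \<and> r \<le> T \<and> 2 * s \<le> t \<and> t \<le> T \<and> \<bar>t - r\<bar> \<ge> 2 * s \<longrightarrow>
        \<bar>integral\<^sup>L M (\<lambda>\<omega>. (W t \<omega> - W (t - s) \<omega>) * (W r \<omega> - W (r - s) \<omega>))\<bar>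
          \<le> C1 * s\<^sup>2 * \<bar>t - r\<bar> powr (-\<alpha>) * (min t r - s) powr (-(3/2 - \<alpha>))
             + C1 * s\<^sup>2 * \<bar>t - r\<bar> powr (-(3/2))))"

definition cond_iv :: "'a measure \<Rightarrow> (real \<Rightarrow> 'a \<Rightarrow> real) \<Rightarrow> real \<Rightarrow> bool" where
  "cond_iv M W T \<longleftrightarrow> (\<exists>C3>0. \<exists>\<gamma>>0.
     (\<forall>s t. 0 < s \<and> s \<le> t \<and> t \<le> T - s \<longrightarrow>
        \<bar>integral\<^sup>L M (\<lambda>\<omega>. W t \<omega> * (W (t + s) \<omega> - W (t - s) \<omega>))\<bar>
          \<le> (if t < 2 * s then C3 * s powr (1/2) else C3 * s * (t - s) powr (-(1/2)))) \<and>
     (\<forall>s t r. 0 < s \<and> s \<le> t \<and> t \<le> T - s \<and> s \<le> r \<and> r \<le> T \<longrightarrow>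
        \<bar>integral\<^sup>L M (\<lambda>\<omega>. W r \<omega> * (W (t + s) \<omega> - W (t - s) \<omega>))\<bar>
          \<le> (if t < 2 * s \<or> \<bar>t - r\<bar> < 2 * s then C3 * s powr (1/2)
              else C3 * s * (t - s) powr (-(1/2)) + C3 * s * \<bar>t - r\<bar> powr (-(1/2)))) \<and>
     (\<forall>s t. 0 < s \<and> 2 * s < t \<and> t \<le> T \<longrightarrow>
        \<bar>integral\<^sup>L M (\<lambda>\<omega>. W s \<omega> * (W t \<omega> - W (t - s) \<omega>))\<bar>
          \<le> C3 * s powr (1/2 + \<gamma>) * (t - 2 * s) powr (-\<gamma>)))"

end

theory Submission
  imports Defs "HOL-Real_Asymp.Real_Asymp"
begin

lemma gaussian_sq_integrable:
  assumes "gaussian_rv M X"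
  shows "integrable M (\<lambda>\<omega>. (X \<omega>)\<^sup>2)"
proof -
  have Xm[measurable]: "X \<in> borel_measurable M" using assms unfolding gaussian_rv_def by auto
  from assms consider (n) \<mu> \<sigma> where "\<sigma> > 0" "distributed M lborel X (\<lambda>x. ennreal (normal_density \<mu> \<sigma> x))"
    | (c) c where "distr M borel X = return borel c" unfolding gaussian_rv_def by blast
  then show ?thesis
  proof cases
    case n
    have "integrable lborel (\<lambda>x. normal_density \<mu> \<sigma> x * ((x - \<mu>)^2 + 2*\<mu>*(x-\<mu>) + \<mu>^2))"
      using integrable_normal_moment[where \<mu>=\<mu> and \<sigma>=\<sigma> and k=2] integrable_normal_moment[where \<mu>=\<mu> and \<sigma>=\<sigma> and k=1]
        integrable_normal_moment[where \<mu>=\<mu> and \<sigma>=\<sigma> and k=0] n(1)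
      by (simp add: distrib_left mult.left_commute[of _ "2*\<mu>"] mult.commute[of _ "\<mu>^2"])
    moreover have "\<And>x. (x - \<mu>)^2 + 2*\<mu>*(x-\<mu>) + \<mu>^2 = x^2" by (simp add: power2_eq_square algebra_simps)
    ultimately have "integrable lborel (\<lambda>x. normal_density \<mu> \<sigma> x * x^2)" by simp
    then show ?thesis
      using distributed_integrable[OF n(2), of "\<lambda>x. x^2"] by (simp add: normal_density_nonneg)
  next
    case c
    have "integrable (return borel c) (\<lambda>x::real. x^2)"
      unfolding integrable_iff_bounded by (simp add: nn_integral_return)
    then have "integrable (distr M borel X) (\<lambda>x::real. x^2)" using c by simp
    then show ?thesis by (subst (asm) integrable_distr_eq) auto
  qed
qed

lemma amgm2: "2 * \<bar>a * b\<bar> \<le> a\<^sup>2 + (b::real)\<^sup>2"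
proof -
  have "0 \<le> (\<bar>a\<bar> - \<bar>b\<bar>)\<^sup>2" by simp
  then show ?thesis by (simp add: power2_eq_square algebra_simps abs_mult)
qed

lemma L2_prod:
  fixes f g :: "'a \<Rightarrow> real"
  assumes [measurable]: "f \<in> borel_measurable M" "g \<in> borel_measurable M"
    and fi: "integrable M (\<lambda>x. (f x)\<^sup>2)" and gi: "integrable M (\<lambda>x. (g x)\<^sup>2)"
  shows "integrable M (\<lambda>x. f x * g x)"
proof -
  have a: "integrable M (\<lambda>x. (f x)\<^sup>2 + (g x)\<^sup>2)" using fi gi by simp
  have b: "(\<lambda>x. f x * g x) \<in> borel_measurable M" by simp
  have c: "AE x in M. norm (f x * g x) \<le> norm ((f x)\<^sup>2 + (g x)\<^sup>2)"
  proof (intro AE_I2)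
    fix x
    have "2 * \<bar>f x * g x\<bar> \<le> (f x)\<^sup>2 + (g x)\<^sup>2"
      by (rule amgm2)
    then show "norm (f x * g x) \<le> norm ((f x)\<^sup>2 + (g x)\<^sup>2)" by simp
  qed
  show ?thesis by (rule Bochner_Integration.integrable_bound[OF a b c])
qed

lemma L2_amgm:
  fixes f g :: "'a \<Rightarrow> real"
  assumes [measurable]: "f \<in> borel_measurable M" "g \<in> borel_measurable M"
    and fi: "integrable M (\<lambda>x. (f x)\<^sup>2)" and gi: "integrable M (\<lambda>x. (g x)\<^sup>2)"
    and l: "l > 0"
  shows "\<bar>integral\<^sup>L M (\<lambda>x. f x * g x)\<bar> \<le> (l * integral\<^sup>L M (\<lambda>x. (f x)\<^sup>2) + integral\<^sup>L M (\<lambda>x. (g x)\<^sup>2) / l) / 2"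
proof -
  have pi: "integrable M (\<lambda>x. f x * g x)" by (rule L2_prod) (use fi gi in auto)
  have "\<bar>integral\<^sup>L M (\<lambda>x. f x * g x)\<bar> \<le> integral\<^sup>L M (\<lambda>x. \<bar>f x * g x\<bar>)"
    by (rule Bochner_Integration.integral_abs_bound)
  also have "\<dots> \<le> integral\<^sup>L M (\<lambda>x. (l * (f x)\<^sup>2 + (g x)\<^sup>2 / l) / 2)"
  proof (rule Bochner_Integration.integral_mono)
    show "integrable M (\<lambda>x. \<bar>f x * g x\<bar>)" using pi by simp
    show "integrable M (\<lambda>x. (l * (f x)\<^sup>2 + (g x)\<^sup>2 / l) / 2)" using fi gi by simp
    fix x
    have "0 \<le> (l * \<bar>f x\<bar> - \<bar>g x\<bar>)\<^sup>2" by simp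
    then have "2 * l * \<bar>f x * g x\<bar> \<le> l * l * (f x)\<^sup>2 + (g x)\<^sup>2"
      by (simp add: power2_eq_square algebra_simps abs_mult)
    then have "2 * \<bar>f x * g x\<bar> \<le> l * (f x)\<^sup>2 + (g x)\<^sup>2 / l" using l
      by (simp add: field_simps)
    then show "\<bar>f x * g x\<bar> \<le> (l * (f x)\<^sup>2 + (g x)\<^sup>2 / l) / 2" by simp
  qed
  also have "\<dots> = (l * integral\<^sup>L M (\<lambda>x. (f x)\<^sup>2) + integral\<^sup>L M (\<lambda>x. (g x)\<^sup>2) / l) / 2"
    using fi gi by simp
  finally show ?thesis .
qed

lemma bessel:
  fixes x :: "'a \<Rightarrow> real" and y :: "'i \<Rightarrow> 'a \<Rightarrow> real"
  assumes I: "finite I"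
    and [measurable]: "x \<in> borel_measurable M" "\<And>i. i \<in> I \<Longrightarrow> y i \<in> borel_measurable M"
    and xi: "integrable M (\<lambda>w. (x w)\<^sup>2)" and yi: "\<And>i. i \<in> I \<Longrightarrow> integrable M (\<lambda>w. (y i w)\<^sup>2)"
    and R: "R > 0" and row: "\<And>i. i \<in> I \<Longrightarrow> (\<Sum>i'\<in>I. \<bar>integral\<^sup>L M (\<lambda>w. y i w * y i' w)\<bar>) \<le> R"
  shows "(\<Sum>i\<in>I. (integral\<^sup>L M (\<lambda>w. x w * y i w))\<^sup>2) \<le> R * integral\<^sup>L M (\<lambda>w. (x w)\<^sup>2)"
proof -
  define c where "c i = integral\<^sup>L M (\<lambda>w. x w * y i w)" for i
  define Z where "Z w = (\<Sum>i\<in>I. c i * y i w)" for w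
  define S where "S = (\<Sum>i\<in>I. (c i)\<^sup>2)"
  define A where "A = integral\<^sup>L M (\<lambda>w. (x w)\<^sup>2)"
  have yy: "integrable M (\<lambda>w. y i w * y i' w)" if "i \<in> I" "i' \<in> I" for i i'
    by (rule L2_prod) (use that yi in auto)
  have xy: "integrable M (\<lambda>w. x w * y i w)" if "i \<in> I" for i
    by (rule L2_prod) (use that yi xi in auto)
  have Zm[measurable]: "Z \<in> borel_measurable M" unfolding Z_def
    by (intro borel_measurable_sum borel_measurable_times) auto
  have Z2: "(Z w)\<^sup>2 = (\<Sum>i\<in>I. \<Sum>i'\<in>I. c i * c i' * (y i w * y i' w))" for w
    unfolding Z_def power2_eq_square sum_product by (simp add: algebra_simps)
  have Zi: "integrable M (\<lambda>w. (Z w)\<^sup>2)"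
    unfolding Z2 by (rule Bochner_Integration.integrable_sum, rule Bochner_Integration.integrable_sum, rule integrable_mult_right, rule yy) auto
  have IZ2: "integral\<^sup>L M (\<lambda>w. (Z w)\<^sup>2) = (\<Sum>i\<in>I. \<Sum>i'\<in>I. c i * c i' * integral\<^sup>L M (\<lambda>w. y i w * y i' w))"
    unfolding Z2 by (simp add: Bochner_Integration.integral_sum Bochner_Integration.integrable_sum integrable_mult_right yy)
  have "(\<Sum>i\<in>I. \<Sum>i'\<in>I. c i * c i' * integral\<^sup>L M (\<lambda>w. y i w * y i' w))
      \<le> (\<Sum>i\<in>I. \<Sum>i'\<in>I. ((c i)\<^sup>2 + (c i')\<^sup>2) / 2 * \<bar>integral\<^sup>L M (\<lambda>w. y i w * y i' w)\<bar>)"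
  proof (intro sum_mono)
    fix i i'
    have a: "\<bar>c i * c i'\<bar> \<le> ((c i)\<^sup>2 + (c i')\<^sup>2) / 2"
      using amgm2[of "c i" "c i'"] by simp
    have "c i * c i' * integral\<^sup>L M (\<lambda>w. y i w * y i' w) \<le> \<bar>c i * c i'\<bar> * \<bar>integral\<^sup>L M (\<lambda>w. y i w * y i' w)\<bar>"
      by (metis abs_ge_self abs_mult)
    also have "\<dots> \<le> ((c i)\<^sup>2 + (c i')\<^sup>2) / 2 * \<bar>integral\<^sup>L M (\<lambda>w. y i w * y i' w)\<bar>"
      by (intro mult_right_mono a) auto
    finally show "c i * c i' * integral\<^sup>L M (\<lambda>w. y i w * y i' w) \<le> ((c i)\<^sup>2 + (c i')\<^sup>2) / 2 * \<bar>integral\<^sup>L M (\<lambda>w. y i w * y i' w)\<bar>" .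
  qed
  also have "\<dots> = (\<Sum>i\<in>I. \<Sum>i'\<in>I. (c i)\<^sup>2 / 2 * \<bar>integral\<^sup>L M (\<lambda>w. y i w * y i' w)\<bar>)
        + (\<Sum>i\<in>I. \<Sum>i'\<in>I. (c i')\<^sup>2 / 2 * \<bar>integral\<^sup>L M (\<lambda>w. y i w * y i' w)\<bar>)"
    by (simp add: add_divide_distrib distrib_right sum.distrib)
  also have "(\<Sum>i\<in>I. \<Sum>i'\<in>I. (c i')\<^sup>2 / 2 * \<bar>integral\<^sup>L M (\<lambda>w. y i w * y i' w)\<bar>)
      = (\<Sum>i\<in>I. \<Sum>i'\<in>I. (c i)\<^sup>2 / 2 * \<bar>integral\<^sup>L M (\<lambda>w. y i w * y i' w)\<bar>)"
    by (subst sum.swap) (simp add: mult.commute)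
  also have "(\<Sum>i\<in>I. \<Sum>i'\<in>I. (c i)\<^sup>2 / 2 * \<bar>integral\<^sup>L M (\<lambda>w. y i w * y i' w)\<bar>)
      = (\<Sum>i\<in>I. (c i)\<^sup>2 / 2 * (\<Sum>i'\<in>I. \<bar>integral\<^sup>L M (\<lambda>w. y i w * y i' w)\<bar>))"
    by (simp add: sum_distrib_left)
  also have "\<dots> \<le> (\<Sum>i\<in>I. (c i)\<^sup>2 / 2 * R)"
    by (intro sum_mono mult_left_mono row) auto
  finally have ZS: "integral\<^sup>L M (\<lambda>w. (Z w)\<^sup>2) \<le> R * S"
    unfolding IZ2 S_def by (simp add: sum_distrib_left sum_divide_distrib[symmetric] algebra_simps)
  have "S = (\<Sum>i\<in>I. c i * integral\<^sup>L M (\<lambda>w. x w * y i w))"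
    unfolding S_def c_def by (simp add: power2_eq_square)
  also have "\<dots> = integral\<^sup>L M (\<lambda>w. x w * Z w)"
    unfolding Z_def by (simp add: sum_distrib_left Bochner_Integration.integral_sum integrable_mult_right xy algebra_simps)
  also have "\<dots> \<le> \<bar>integral\<^sup>L M (\<lambda>w. x w * Z w)\<bar>" by simp
  also have "\<dots> \<le> (R * A + integral\<^sup>L M (\<lambda>w. (Z w)\<^sup>2) / R) / 2"
    unfolding A_def by (rule L2_amgm) (use xi Zi R in auto)
  also have "\<dots> \<le> (R * A + (R * S) / R) / 2"
    using ZS R by (intro divide_right_mono add_left_mono) auto
  finally have "S \<le> (R * A + S) / 2" using R by simp
  then show ?thesis unfolding S_def A_def c_def by simp
qed

lemma harm_sqrt: "(\<Sum>i\<in>{1..N}. 1 / real i) \<le> 2 * sqrt (real N)"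
proof (induction N)
  case 0 then show ?case by simp
next
  case (Suc N)
  have "(\<Sum>i\<in>{1..Suc N}. 1 / real i) = (\<Sum>i\<in>{1..N}. 1 / real i) + 1 / (real N + 1)"
    by simp
  also have "\<dots> \<le> 2 * sqrt (real N) + 1 / (real N + 1)" using Suc by simp
  also have "\<dots> \<le> 2 * sqrt (real N + 1)"
  proof -
    have s: "sqrt (real N) \<le> sqrt (real N + 1)" by simp
    have g1: "1 \<le> sqrt (real N + 1)" by simp
    have "sqrt (real N + 1) * 1 \<le> sqrt (real N + 1) * sqrt (real N + 1)"
      using g1 by (intro mult_left_mono) auto
    then have q: "sqrt (real N + 1) \<le> real N + 1" by simp
    have "(sqrt (real N + 1) - sqrt (real N)) * (sqrt (real N + 1) + sqrt (real N)) = 1"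
      by (simp add: algebra_simps)
    moreover have "sqrt (real N + 1) + sqrt (real N) \<le> 2 * (real N + 1)"
      using add_mono[OF q order_trans[OF s q]] by simp
    ultimately have "1 \<le> (sqrt (real N + 1) - sqrt (real N)) * (2 * (real N + 1))"
      using s by (metis mult_left_mono diff_ge_0_iff_ge order_trans order_refl)
    then have "1 / (real N + 1) \<le> 2 * (sqrt (real N + 1) - sqrt (real N))"
      by (simp add: field_simps)
    then show ?thesis by simp
  qed
  finally show ?case by (simp add: add.commute)
qed

lemma tail_sq:
  assumes "j < m"
  shows "(\<Sum>k\<in>{m..<m+N}. 1 / (real k - real j)\<^sup>2) \<le> 2 / (real m - real j) - 2 / (real (m + N) - real j)"
proof (induction N)
  case 0 then show ?case by simp
next
  case (Suc N)
  define x where "x = real (m + N) - real j"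
  have x1: "x \<ge> 1" using assms unfolding x_def by simp
  have e: "2 / x - 2 / (x + 1) = 2 / (x * (x + 1))" using x1 by (simp add: field_simps)
  have xx: "x * (x + 1) \<le> 2 * x\<^sup>2"
  proof -
    have "x * 1 \<le> x * x" using x1 by (intro mult_left_mono) auto
    then show ?thesis by (simp add: power2_eq_square algebra_simps)
  qed
  have "1 / x\<^sup>2 = 2 / (2 * x\<^sup>2)" by simp
  also have "\<dots> \<le> 2 / (x * (x + 1))"
    using x1 xx by (intro divide_left_mono) auto
  finally have "1 / x\<^sup>2 \<le> 2 / x - 2 / (x + 1)" using e by simp
  moreover have "2 / (real (m + Suc N) - real j) = 2 / (x + 1)" unfolding x_def by simp
  moreover have "(\<Sum>k\<in>{m..<m+Suc N}. 1 / (real k - real j)\<^sup>2) = (\<Sum>k\<in>{m..<m+N}. 1 / (real k - real j)\<^sup>2) + 1 / x\<^sup>2"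
    unfolding x_def by simp
  moreover have "2 / (real (m + N) - real j) = 2 / x" unfolding x_def by simp
  ultimately show ?case using Suc by linarith
qed

lemma tail_sq':
  assumes "j < m"
  shows "(\<Sum>k\<in>{m..<m+N}. 1 / (real k - real j)\<^sup>2) \<le> 2 / (real m - real j)"
proof -
  have "0 \<le> 2 / (real (m + N) - real j)" using assms by simp
  then show ?thesis using tail_sq[OF assms, of N] by linarith
qed

lemma sum_rev_harm: "(\<Sum>j\<in>{1..m}. 1 / (real m + 1 - real j)) = (\<Sum>i\<in>{1..m}. 1 / real i)"
  by (rule sum.reindex_bij_witness[of _ "\<lambda>i. m + 1 - i" "\<lambda>j. m + 1 - j"]) (auto simp: of_nat_diff)

lemma sum_left_harm: "(\<Sum>k'\<in>{lo..<k}. 1 / (real k - real k')) \<le> (\<Sum>i\<in>{1..k}. 1 / real i)"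
proof -
  have "(\<Sum>k'\<in>{lo..<k}. 1 / (real k - real k')) \<le> (\<Sum>k'\<in>{0..<k}. 1 / (real k - real k'))"
    by (rule sum_mono2) auto
  also have "\<dots> = (\<Sum>i\<in>{1..k}. 1 / real i)"
    by (rule sum.reindex_bij_witness[of _ "\<lambda>i. k - i" "\<lambda>k'. k - k'"]) (auto simp: of_nat_diff)
  finally show ?thesis .
qed

lemma sum_right_harm: "(\<Sum>k'\<in>{k<..hi}. 1 / (real k' - real k)) \<le> (\<Sum>i\<in>{1..hi}. 1 / real i)"
proof -
  have "(\<Sum>k'\<in>{k<..hi}. 1 / (real k' - real k)) = (\<Sum>i\<in>{1..hi - k}. 1 / real i)"
    by (rule sum.reindex_bij_witness[of _ "\<lambda>i. i + k" "\<lambda>k'. k' - k"]) (auto simp: of_nat_diff)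
  also have "\<dots> \<le> (\<Sum>i\<in>{1..hi}. 1 / real i)"
    by (rule sum_mono2) auto
  finally show ?thesis .
qed

lemma two_sided:
  fixes lo hi k :: nat
  assumes True: "k \<le> hi"
  shows "(\<Sum>k'\<in>{lo..hi} - {k}. 1 / \<bar>real k - real k'\<bar>) \<le> 4 * sqrt (real hi)"
proof -
  have sub: "{lo..hi} - {k} \<subseteq> {lo..<k} \<union> {k<..hi}" by auto
  have "(\<Sum>k'\<in>{lo..hi} - {k}. 1 / \<bar>real k - real k'\<bar>) \<le> (\<Sum>k'\<in>{lo..<k} \<union> {k<..hi}. 1 / \<bar>real k - real k'\<bar>)"
    by (rule sum_mono2[OF _ sub]) auto
  also have "\<dots> = (\<Sum>k'\<in>{lo..<k}. 1 / \<bar>real k - real k'\<bar>) + (\<Sum>k'\<in>{k<..hi}. 1 / \<bar>real k - real k'\<bar>)"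
    by (rule sum.union_disjoint) auto
  also have "(\<Sum>k'\<in>{lo..<k}. 1 / \<bar>real k - real k'\<bar>) = (\<Sum>k'\<in>{lo..<k}. 1 / (real k - real k'))"
    by (rule sum.cong) auto
  also have "(\<Sum>k'\<in>{k<..hi}. 1 / \<bar>real k - real k'\<bar>) = (\<Sum>k'\<in>{k<..hi}. 1 / (real k' - real k))"
    by (rule sum.cong) auto
  also have "(\<Sum>k'\<in>{lo..<k}. 1 / (real k - real k')) + (\<Sum>k'\<in>{k<..hi}. 1 / (real k' - real k))
      \<le> 2 * sqrt (real k) + 2 * sqrt (real hi)"
    using sum_left_harm[where lo=lo and k=k] sum_right_harm[of k hi] harm_sqrt[of k] harm_sqrt[of hi] by linarith
  also have "\<dots> \<le> 4 * sqrt (real hi)" using True by simp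
  finally show ?thesis .
qed

context
  fixes M :: "'a measure" and W :: "real \<Rightarrow> 'a \<Rightarrow> real"
  assumes cgp: "centered_gaussian_process M W"
begin

lemma gauss_lin: "finite F \<Longrightarrow> F \<subseteq> {0..} \<Longrightarrow> gaussian_rv M (\<lambda>\<omega>. \<Sum>t\<in>F. a t * W t \<omega>)"
  using cgp unfolding centered_gaussian_process_def by simp

lemma Wm: "t \<ge> 0 \<Longrightarrow> W t \<in> borel_measurable M"
proof -
  assume t: "t \<ge> 0"
  have "gaussian_rv M (\<lambda>\<omega>. \<Sum>s\<in>{t}. (\<lambda>_. 1) s * W s \<omega>)"
    using t by (intro gauss_lin) auto
  then show ?thesis unfolding gaussian_rv_def by simp
qed

lemma inc_meas: "u \<ge> 0 \<Longrightarrow> v \<ge> 0 \<Longrightarrow> (\<lambda>\<omega>. W u \<omega> - W v \<omega>) \<in> borel_measurable M"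
  using Wm by (intro borel_measurable_diff) auto

lemma inc_sq: "u \<ge> 0 \<Longrightarrow> v \<ge> 0 \<Longrightarrow> integrable M (\<lambda>\<omega>. (W u \<omega> - W v \<omega>)\<^sup>2)"
proof -
  assume u: "u \<ge> 0" and v: "v \<ge> 0"
  show ?thesis
  proof (cases "u = v")
    case True then show ?thesis by simp
  next
    case False
    let ?a = "\<lambda>s. if s = u then 1 else (-1::real)"
    have "gaussian_rv M (\<lambda>\<omega>. \<Sum>s\<in>{u,v}. ?a s * W s \<omega>)"
      using u v by (intro gauss_lin) auto
    moreover have "(\<lambda>\<omega>. \<Sum>s\<in>{u,v}. ?a s * W s \<omega>) = (\<lambda>\<omega>. W u \<omega> - W v \<omega>)"
      using False by auto
    ultimately show ?thesis using gaussian_sq_integrable[of M "\<lambda>\<omega>. W u \<omega> - W v \<omega>"] by simp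
  qed
qed

lemma beta_crude:
  assumes ci: "\<And>s t. 0 < s \<and> s \<le> t \<and> t \<le> T \<Longrightarrow>
      integral\<^sup>L M (\<lambda>\<omega>. (W t \<omega> - W (t - s) \<omega>)\<^sup>2) \<le> C1 * s powr (1/2)"
    and n: "n \<ge> 1" and a: "real a + 1 \<le> real n * T" and b: "real b + 1 \<le> real n * T"
  shows "\<bar>beta_n M W n a b\<bar> \<le> C1 / sqrt (real n)"
proof -
  have sq: "integral\<^sup>L M (\<lambda>\<omega>. (W ((real c + 1)/real n) \<omega> - W (real c/real n) \<omega>)\<^sup>2) \<le> C1 / sqrt (real n)"
    if c: "real c + 1 \<le> real n * T" for c
  proof -
    have e: "(real c + 1)/real n - 1/real n = real c / real n" using n by (simp add: field_simps)
    have "integral\<^sup>L M (\<lambda>\<omega>. (W ((real c + 1)/real n) \<omega> - W ((real c + 1)/real n - 1/real n) \<omega>)\<^sup>2)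
        \<le> C1 * (1/real n) powr (1/2)"
      using n c by (intro ci) (auto simp: field_simps)
    then show ?thesis unfolding e using n by (simp add: powr_half_sqrt real_sqrt_divide)
  qed
  have "\<bar>beta_n M W n a b\<bar> \<le> (1 * integral\<^sup>L M (\<lambda>\<omega>. (W ((real a + 1)/real n) \<omega> - W (real a/real n) \<omega>)\<^sup>2)
       + integral\<^sup>L M (\<lambda>\<omega>. (W ((real b + 1)/real n) \<omega> - W (real b/real n) \<omega>)\<^sup>2) / 1) / 2"
    unfolding beta_n_def
    by (rule L2_amgm) (auto intro!: inc_meas inc_sq)
  also have "\<dots> \<le> (C1 / sqrt (real n) + C1 / sqrt (real n)) / 2"
    using sq[OF a] sq[OF b] by (intro divide_right_mono add_mono) simp_all
  finally show ?thesis by simp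
qed

lemma beta_decay:
  assumes cii: "\<And>s r t. 0 < s \<and> 2 * s \<le> r \<and> r \<le> T \<and> 2 * s \<le> t \<and> t \<le> T \<and> \<bar>t - r\<bar> \<ge> 2 * s \<Longrightarrow>
        \<bar>integral\<^sup>L M (\<lambda>\<omega>. (W t \<omega> - W (t - s) \<omega>) * (W r \<omega> - W (r - s) \<omega>))\<bar>
          \<le> C * s\<^sup>2 * \<bar>t - r\<bar> powr (-\<alpha>) * (min t r - s) powr (-(3/2 - \<alpha>))
             + C * s\<^sup>2 * \<bar>t - r\<bar> powr (-(3/2))"
    and C: "C > 0" and al: "1 < \<alpha>" "\<alpha> \<le> 3/2"
    and n: "n \<ge> 1" and a1: "1 \<le> a" and ab: "a + 2 \<le> b" and b: "real b + 1 \<le> real n * T"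
  shows "\<bar>beta_n M W n a b\<bar> \<le> 2 * C / (sqrt (real n) * (real b - real a))"
proof -
  define N where "N = real n"
  define D where "D = real b - real a"
  have N1: "N \<ge> 1" using n N_def by simp
  have D2: "D \<ge> 2" using ab D_def by simp
  define s where "s = 1 / N"
  define t where "t = (real b + 1) / N"
  define r where "r = (real a + 1) / N"
  have ts: "t - s = real b / N" "r - s = real a / N" unfolding t_def r_def s_def using N1 by (auto simp: field_simps)
  have tr: "\<bar>t - r\<bar> = D / N" unfolding t_def r_def D_def using N1 ab by (auto simp: field_simps)
  have mn: "min t r - s = real a / N" using ab ts unfolding t_def r_def using N1
    by (auto simp: min_def field_simps)
  have "r \<le> t" unfolding r_def t_def using ab N1 by (auto simp: field_simps)
  have ab': "real a + 2 \<le> real b" using ab by linarith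
  have Np: "N > 0" using N1 by simp
  have h1: "2 * s \<le> r" unfolding s_def r_def using Np a1 by (simp add: divide_right_mono)
  have h2: "t \<le> T" unfolding t_def using Np b N_def by (simp add: pos_divide_le_eq mult.commute)
  have h3: "r \<le> T" unfolding r_def using Np b N_def ab' by (simp add: pos_divide_le_eq mult.commute)
  have h4: "2 * s \<le> t" unfolding s_def t_def using Np ab' by (simp add: divide_right_mono)
  have h5: "\<bar>t - r\<bar> \<ge> 2 * s" unfolding tr s_def using Np D2 by (simp add: divide_right_mono)
  have hyp: "0 < s \<and> 2 * s \<le> r \<and> r \<le> T \<and> 2 * s \<le> t \<and> t \<le> T \<and> \<bar>t - r\<bar> \<ge> 2 * s"
    using h1 h2 h3 h4 h5 Np s_def by simp
  have eq: "beta_n M W n a b = integral\<^sup>L M (\<lambda>\<omega>. (W t \<omega> - W (t - s) \<omega>) * (W r \<omega> - W (r - s) \<omega>))"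
    unfolding beta_n_def ts unfolding t_def r_def N_def by (simp add: mult.commute)
  have p1: "(real a / N) powr (-(3/2 - \<alpha>)) \<le> (1 / N) powr (-(3/2 - \<alpha>))"
    using al N1 a1 by (intro powr_mono2') (auto simp: field_simps)
  have Npos: "N > 0" using N1 by simp
  have Dpos: "D > 0" using D2 by simp
  have t1: "C * s\<^sup>2 * \<bar>t - r\<bar> powr (-\<alpha>) * (min t r - s) powr (-(3/2 - \<alpha>))
      \<le> C * s\<^sup>2 * (D / N) powr (-\<alpha>) * (1 / N) powr (-(3/2 - \<alpha>))"
    unfolding tr mn using p1 C by (intro mult_left_mono) auto
  have "C * s\<^sup>2 * (D / N) powr (-\<alpha>) * (1 / N) powr (-(3/2 - \<alpha>))
      = C * D powr (-\<alpha>) * (N powr (-2) * N powr \<alpha> * N powr (3/2 - \<alpha>))"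
    unfolding s_def using Npos Dpos
    by (simp add: powr_divide powr_minus power2_eq_square powr_add[symmetric] field_simps)
  also have "N powr (-2) * N powr \<alpha> * N powr (3/2 - \<alpha>) = N powr (-1/2)"
    by (simp add: powr_add[symmetric])
  also have "D powr (-\<alpha>) \<le> D powr (-1)" using al D2 by (intro powr_mono) auto
  then have "C * D powr (-\<alpha>) * N powr (-1/2) \<le> C * D powr (-1) * N powr (-1/2)"
    using C by (intro mult_right_mono mult_left_mono) auto
  finally have T1: "C * s\<^sup>2 * \<bar>t - r\<bar> powr (-\<alpha>) * (min t r - s) powr (-(3/2 - \<alpha>))
      \<le> C * D powr (-1) * N powr (-1/2)" using t1 by linarith
  have "C * s\<^sup>2 * \<bar>t - r\<bar> powr (-(3/2)) = C * D powr (-(3/2)) * (N powr (-2) * N powr (3/2))"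
    unfolding tr s_def using Npos Dpos
    by (simp add: powr_divide powr_minus power2_eq_square field_simps)
  also have "N powr (-2) * N powr (3/2) = N powr (-1/2)" by (simp add: powr_add[symmetric])
  also have "D powr (-(3/2)) \<le> D powr (-1)" using D2 by (intro powr_mono) auto
  then have "C * D powr (-(3/2)) * N powr (-1/2) \<le> C * D powr (-1) * N powr (-1/2)"
    using C by (intro mult_right_mono mult_left_mono) auto
  finally have T2: "C * s\<^sup>2 * \<bar>t - r\<bar> powr (-(3/2)) \<le> C * D powr (-1) * N powr (-1/2)" .
  have "\<bar>beta_n M W n a b\<bar> \<le> 2 * (C * D powr (-1) * N powr (-1/2))"
    unfolding eq using cii[OF hyp] T1 T2 by linarith
  also have "\<dots> = 2 * C / (sqrt (real n) * (real b - real a))"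
    unfolding N_def D_def using Npos Dpos N_def D_def
    by (simp add: powr_minus powr_half_sqrt[symmetric] powr_divide field_simps)
  finally show ?thesis .
qed

end

lemma beta_sym: "beta_n M W n a b = beta_n M W n b a"
  by (simp add: beta_n_def mult.commute)

context
  fixes M :: "'a measure" and W :: "real \<Rightarrow> 'a \<Rightarrow> real"
  assumes cgp: "centered_gaussian_process M W"
begin

lemma beta_decay_sym:
  assumes cii: "\<And>s r t. 0 < s \<and> 2 * s \<le> r \<and> r \<le> T \<and> 2 * s \<le> t \<and> t \<le> T \<and> \<bar>t - r\<bar> \<ge> 2 * s \<Longrightarrow>
        \<bar>integral\<^sup>L M (\<lambda>\<omega>. (W t \<omega> - W (t - s) \<omega>) * (W r \<omega> - W (r - s) \<omega>))\<bar>
          \<le> C * s\<^sup>2 * \<bar>t - r\<bar> powr (-\<alpha>) * (min t r - s) powr (-(3/2 - \<alpha>))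
             + C * s\<^sup>2 * \<bar>t - r\<bar> powr (-(3/2))"
    and C: "C > 0" and al: "1 < \<alpha>" "\<alpha> \<le> 3/2"
    and n: "n \<ge> 1" and x1: "1 \<le> x" and y1: "1 \<le> y" and xy: "2 \<le> \<bar>real x - real y\<bar>"
    and xT: "real x + 1 \<le> real n * T" and yT: "real y + 1 \<le> real n * T"
  shows "\<bar>beta_n M W n x y\<bar> \<le> 2 * C / (sqrt (real n) * \<bar>real x - real y\<bar>)"
proof (cases "x \<le> y")
  case True
  then have "x + 2 \<le> y" using xy by linarith
  then show ?thesis using beta_decay[OF cgp cii C al n x1 _ yT] True by simp
next
  case False
  then have "y + 2 \<le> x" using xy by linarith
  then show ?thesis using beta_decay[OF cgp cii C al n y1 _ xT] False
    by (simp add: beta_sym[of M W n x y] abs_minus_commute)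
qed


lemma pointwise:
  assumes ci: "\<And>s t. 0 < s \<and> s \<le> t \<and> t \<le> T \<Longrightarrow>
      integral\<^sup>L M (\<lambda>\<omega>. (W t \<omega> - W (t - s) \<omega>)\<^sup>2) \<le> C1 * s powr (1/2)"
    and cii: "\<And>s r t. 0 < s \<and> 2 * s \<le> r \<and> r \<le> T \<and> 2 * s \<le> t \<and> t \<le> T \<and> \<bar>t - r\<bar> \<ge> 2 * s \<Longrightarrow>
        \<bar>integral\<^sup>L M (\<lambda>\<omega>. (W t \<omega> - W (t - s) \<omega>) * (W r \<omega> - W (r - s) \<omega>))\<bar>
          \<le> C * s\<^sup>2 * \<bar>t - r\<bar> powr (-\<alpha>) * (min t r - s) powr (-(3/2 - \<alpha>))
             + C * s\<^sup>2 * \<bar>t - r\<bar> powr (-(3/2))"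
    and C: "C > 0" and C1: "C1 > 0" and al: "1 < \<alpha>" "\<alpha> \<le> 3/2"
    and n: "n \<ge> 1" and pq: "p \<in> {1,2}" "q \<in> {1,2}"
    and j: "1 \<le> j" "j < k" and a1: "1 \<le> 2*j - p" and kT: "2 * real k \<le> real n * T"
  shows "(beta_n M W n (2*j-p) (2*k-q))\<^sup>2 \<le> (C1\<^sup>2 + 4 * C\<^sup>2) / (real n * (real k - real j)\<^sup>2)"
proof -
  define a where "a = 2*j-p"
  define b where "b = 2*k-q"
  have ra: "real a = 2 * real j - real p" unfolding a_def using pq j by (auto simp: of_nat_diff)
  have rb: "real b = 2 * real k - real q" unfolding b_def using pq j by (auto simp: of_nat_diff)
  have p12: "1 \<le> real p" "real p \<le> 2" "1 \<le> real q" "real q \<le> 2" using pq by auto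
  have kj: "real k - real j \<ge> 1" using j by simp
  have bT: "real b + 1 \<le> real n * T" using rb p12 kT by linarith
  have aT: "real a + 1 \<le> real n * T" using ra rb p12 kT kj by linarith
  have b1: "1 \<le> b" using rb p12 kj j by simp
  have a1': "1 \<le> a" using a1 a_def by simp
  have np: "real n > 0" using n by simp
  show ?thesis
  proof (cases "a + 2 \<le> b")
    case True
    have d: "real b - real a \<ge> real k - real j" using ra rb p12 kj by linarith
    have "\<bar>beta_n M W n a b\<bar> \<le> 2 * C / (sqrt (real n) * (real b - real a))"
      by (rule beta_decay[OF cgp cii C al n a1' True bT])
    also have "\<dots> \<le> 2 * C / (sqrt (real n) * (real k - real j))"
      using d kj np C by (intro divide_left_mono mult_left_mono) auto
    finally have "(beta_n M W n a b)\<^sup>2 \<le> (2 * C / (sqrt (real n) * (real k - real j)))\<^sup>2"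
      by (metis abs_ge_zero power2_abs power_mono)
    also have "\<dots> = 4 * C\<^sup>2 / (real n * (real k - real j)\<^sup>2)"
      using np by (simp add: power2_eq_square field_simps)
    also have "\<dots> \<le> (C1\<^sup>2 + 4 * C\<^sup>2) / (real n * (real k - real j)\<^sup>2)"
      using np kj by (intro divide_right_mono) auto
    finally show ?thesis unfolding a_def b_def .
  next
    case False
    have kj1: "real k - real j = 1" using False ra rb p12 kj by linarith
    have "\<bar>beta_n M W n a b\<bar> \<le> C1 / sqrt (real n)"
      by (rule beta_crude[OF cgp ci n aT bT])
    then have "(beta_n M W n a b)\<^sup>2 \<le> (C1 / sqrt (real n))\<^sup>2"
      by (metis abs_ge_zero power2_abs power_mono)
    also have "\<dots> = C1\<^sup>2 / (real n * (real k - real j)\<^sup>2)"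
      using np kj1 by (simp add: power2_eq_square field_simps)
    also have "\<dots> \<le> (C1\<^sup>2 + 4 * C\<^sup>2) / (real n * (real k - real j)\<^sup>2)"
      using np kj by (intro divide_right_mono) auto
    finally show ?thesis unfolding a_def b_def .
  qed
qed


lemma main_rows:
  assumes ci: "\<And>s t. 0 < s \<and> s \<le> t \<and> t \<le> T \<Longrightarrow>
      integral\<^sup>L M (\<lambda>\<omega>. (W t \<omega> - W (t - s) \<omega>)\<^sup>2) \<le> C1 * s powr (1/2)"
    and cii: "\<And>s r t. 0 < s \<and> 2 * s \<le> r \<and> r \<le> T \<and> 2 * s \<le> t \<and> t \<le> T \<and> \<bar>t - r\<bar> \<ge> 2 * s \<Longrightarrow>
        \<bar>integral\<^sup>L M (\<lambda>\<omega>. (W t \<omega> - W (t - s) \<omega>) * (W r \<omega> - W (r - s) \<omega>))\<bar>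
          \<le> C * s\<^sup>2 * \<bar>t - r\<bar> powr (-\<alpha>) * (min t r - s) powr (-(3/2 - \<alpha>))
             + C * s\<^sup>2 * \<bar>t - r\<bar> powr (-(3/2))"
    and C: "C > 0" and C1: "C1 > 0" and al: "1 < \<alpha>" "\<alpha> \<le> 3/2"
    and n: "n \<ge> 1" and pq: "p \<in> {1,2}" "q \<in> {1,2}" and T: "T > 0"
    and jk: "j1 \<le> k0" and j1T: "2 * real j1 \<le> real n * T" and k1T: "2 * real k1 \<le> real n * T"
  shows "(\<Sum>j\<in>{j\<in>{j0+1..j1}. 1 \<le> 2*j-p}. \<Sum>k\<in>{k0+1..k1}. (beta_n M W n (2*j-p) (2*k-q))\<^sup>2)
     \<le> 4 * (C1\<^sup>2 + 4 * C\<^sup>2) * sqrt T / sqrt (real n)"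
proof -
  define K0 where "K0 = C1\<^sup>2 + 4 * C\<^sup>2"
  have K0: "K0 > 0" unfolding K0_def using C1 by (simp add: add_pos_nonneg)
  have np: "real n > 0" using n by simp
  have "(\<Sum>j\<in>{j\<in>{j0+1..j1}. 1 \<le> 2*j-p}. \<Sum>k\<in>{k0+1..k1}. (beta_n M W n (2*j-p) (2*k-q))\<^sup>2)
      \<le> (\<Sum>j\<in>{j\<in>{j0+1..j1}. 1 \<le> 2*j-p}. \<Sum>k\<in>{k0+1..k1}. K0 / (real n * (real k - real j)\<^sup>2))"
  proof (intro sum_mono)
    fix j k assume jj: "j \<in> {j\<in>{j0+1..j1}. 1 \<le> 2*j-p}" and kk: "k \<in> {k0+1..k1}"
    have "2 * real k \<le> real n * T" using kk k1T by (smt (verit) atLeastAtMost_iff of_nat_le_iff)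
    then show "(beta_n M W n (2*j-p) (2*k-q))\<^sup>2 \<le> K0 / (real n * (real k - real j)\<^sup>2)"
      unfolding K0_def
      using jj kk jk by (intro pointwise[OF ci cii C C1 al n pq]) auto
  qed
  also have "\<dots> = (\<Sum>j\<in>{j\<in>{j0+1..j1}. 1 \<le> 2*j-p}. K0 / real n * (\<Sum>k\<in>{k0+1..k1}. 1 / (real k - real j)\<^sup>2))"
    by (simp add: sum_distrib_left)
  also have "\<dots> \<le> (\<Sum>j\<in>{j\<in>{j0+1..j1}. 1 \<le> 2*j-p}. K0 / real n * (2 / (real j1 + 1 - real j)))"
  proof (intro sum_mono mult_left_mono)
    fix j assume jj: "j \<in> {j\<in>{j0+1..j1}. 1 \<le> 2*j-p}"
    then have jl: "j < j1 + 1" by auto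
    have "(\<Sum>k\<in>{k0+1..k1}. 1 / (real k - real j)\<^sup>2) \<le> (\<Sum>k\<in>{j1+1..<j1+1+(k1-j1)}. 1 / (real k - real j)\<^sup>2)"
      using jk by (intro sum_mono2) auto
    also have "\<dots> \<le> 2 / (real (j1 + 1) - real j)" by (rule tail_sq'[OF jl])
    finally show "(\<Sum>k\<in>{k0+1..k1}. 1 / (real k - real j)\<^sup>2) \<le> 2 / (real j1 + 1 - real j)" by (simp add: add.commute)
  qed (use K0 np in auto)
  also have "\<dots> \<le> (\<Sum>j\<in>{1..j1}. K0 / real n * (2 / (real j1 + 1 - real j)))"
    using K0 np by (intro sum_mono2) auto
  also have "\<dots> = 2 * K0 / real n * (\<Sum>j\<in>{1..j1}. 1 / (real j1 + 1 - real j))"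
    by (simp add: sum_distrib_left mult.commute)
  also have "\<dots> = 2 * K0 / real n * (\<Sum>i\<in>{1..j1}. 1 / real i)" by (simp only: sum_rev_harm)
  also have "\<dots> \<le> 2 * K0 / real n * (2 * sqrt (real j1))"
    using K0 np harm_sqrt by (intro mult_left_mono) auto
  also have "\<dots> \<le> 2 * K0 / real n * (2 * sqrt (real n * T))"
    using K0 np j1T by (intro mult_left_mono) auto
  also have "\<dots> = 4 * K0 * sqrt T / sqrt (real n)"
  proof -
    have "real n = sqrt (real n) * sqrt (real n)" by simp
    then show ?thesis using np by (simp add: real_sqrt_mult field_simps)
  qed
  finally show ?thesis unfolding K0_def .
qed


lemma zero_row:
  assumes ci: "\<And>s t. 0 < s \<and> s \<le> t \<and> t \<le> T \<Longrightarrow>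
      integral\<^sup>L M (\<lambda>\<omega>. (W t \<omega> - W (t - s) \<omega>)\<^sup>2) \<le> C1 * s powr (1/2)"
    and cii: "\<And>s r t. 0 < s \<and> 2 * s \<le> r \<and> r \<le> T \<and> 2 * s \<le> t \<and> t \<le> T \<and> \<bar>t - r\<bar> \<ge> 2 * s \<Longrightarrow>
        \<bar>integral\<^sup>L M (\<lambda>\<omega>. (W t \<omega> - W (t - s) \<omega>) * (W r \<omega> - W (r - s) \<omega>))\<bar>
          \<le> C * s\<^sup>2 * \<bar>t - r\<bar> powr (-\<alpha>) * (min t r - s) powr (-(3/2 - \<alpha>))
             + C * s\<^sup>2 * \<bar>t - r\<bar> powr (-(3/2))"
    and C: "C > 0" and C1: "C1 > 0" and al: "1 < \<alpha>" "\<alpha> \<le> 3/2"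
    and n: "n \<ge> 1" and q: "q \<in> {1,2}" and T: "T > 0"
    and k0: "1 \<le> k0" and k1T: "2 * real k1 \<le> real n * T" and nT: "1 \<le> real n * T"
  shows "(\<Sum>k\<in>{k0+1..k1}. (beta_n M W n 0 (2*k-q))\<^sup>2) \<le> (C1 + 4 * C * sqrt T) * (C1 / sqrt (real n))"
proof -
  define K where "K = {k0+1..k1}"
  define x where "x = (\<lambda>\<omega>. W ((real 0 + 1) / real n) \<omega> - W (real 0 / real n) \<omega>)"
  define y where "y = (\<lambda>k \<omega>. W ((real (2*k-q) + 1) / real n) \<omega> - W (real (2*k-q) / real n) \<omega>)"
  define R where "R = C1 + 4 * C * sqrt T"
  have np: "real n > 0" using n by simp
  have sn: "sqrt (real n) \<ge> 1" using n by simp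
  have R: "R > 0" unfolding R_def using C1 C T by (simp add: add_pos_nonneg)
  have q12: "1 \<le> real q" "real q \<le> 2" using q by auto
  have bk: "real (2*k-q) = 2 * real k - real q" if "k \<in> K" for k
    using that k0 q unfolding K_def by (auto simp: of_nat_diff)
  have bT: "real (2*k-q) + 1 \<le> real n * T" if "k \<in> K" for k
  proof -
    have "real k \<le> real k1" using that unfolding K_def by simp
    then show ?thesis using bk[OF that] q12 k1T by linarith
  qed
  have b1: "1 \<le> 2*k-q" if "k \<in> K" for k
  proof -
    have "real k \<ge> 2" using that k0 unfolding K_def by simp
    then have "real (2*k-q) \<ge> 1" using bk[OF that] q12 by linarith
    then show ?thesis by simp
  qed
  have row: "(\<Sum>k'\<in>K. \<bar>integral\<^sup>L M (\<lambda>w. y k w * y k' w)\<bar>) \<le> R" if kK: "k \<in> K" for k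
  proof -
    have fin: "finite K" unfolding K_def by simp
    have "(\<Sum>k'\<in>K. \<bar>integral\<^sup>L M (\<lambda>w. y k w * y k' w)\<bar>)
        = \<bar>beta_n M W n (2*k-q) (2*k-q)\<bar> + (\<Sum>k'\<in>K - {k}. \<bar>beta_n M W n (2*k-q) (2*k'-q)\<bar>)"
      unfolding sum.remove[OF fin kK] unfolding y_def beta_n_def by (rule refl)
    also have "\<bar>beta_n M W n (2*k-q) (2*k-q)\<bar> \<le> C1"
    proof -
      have "\<bar>beta_n M W n (2*k-q) (2*k-q)\<bar> \<le> C1 / sqrt (real n)"
        by (rule beta_crude[OF cgp ci n bT[OF kK] bT[OF kK]])
      also have "\<dots> \<le> C1" using sn C1 by (simp add: divide_le_eq)
      finally show ?thesis .
    qed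
    also have "(\<Sum>k'\<in>K - {k}. \<bar>beta_n M W n (2*k-q) (2*k'-q)\<bar>)
        \<le> (\<Sum>k'\<in>K - {k}. C / sqrt (real n) * (1 / \<bar>real k - real k'\<bar>))"
    proof (intro sum_mono)
      fix k' assume k': "k' \<in> K - {k}"
      have d: "\<bar>real (2*k-q) - real (2*k'-q)\<bar> = 2 * \<bar>real k - real k'\<bar>"
      proof -
        have "\<bar>2 * real k - 2 * real k'\<bar> = 2 * \<bar>real k - real k'\<bar>" by (simp add: abs_if)
        then show ?thesis using bk[OF kK] bk[of k'] k' by auto
      qed
      have dk: "\<bar>real k - real k'\<bar> \<ge> 1" using k' by (auto simp: abs_if)
      have "\<bar>beta_n M W n (2*k-q) (2*k'-q)\<bar> \<le> 2 * C / (sqrt (real n) * \<bar>real (2*k-q) - real (2*k'-q)\<bar>)"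
      proof -
        have k'K: "k' \<in> K" using k' by simp
        have "2 \<le> \<bar>real (2*k-q) - real (2*k'-q)\<bar>" using dk d by simp
        from beta_decay_sym[OF cii C al n b1[OF kK] b1[OF k'K] this bT[OF kK] bT[OF k'K]] show ?thesis .
      qed
      also have "\<dots> = C / sqrt (real n) * (1 / \<bar>real k - real k'\<bar>)" unfolding d by simp
      finally show "\<bar>beta_n M W n (2*k-q) (2*k'-q)\<bar> \<le> C / sqrt (real n) * (1 / \<bar>real k - real k'\<bar>)" .
    qed
    also have "\<dots> = C / sqrt (real n) * (\<Sum>k'\<in>{k0+1..k1} - {k}. 1 / \<bar>real k - real k'\<bar>)"
      unfolding K_def by (simp add: sum_distrib_left)
    also have "\<dots> \<le> C / sqrt (real n) * (4 * sqrt (real k1))"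
      using kK C unfolding K_def by (intro mult_left_mono two_sided) auto
    also have "\<dots> \<le> 4 * C * sqrt T"
    proof -
      have "real k1 \<le> real n * T" using k1T np T by (smt (verit) mult_pos_pos)
      then have "sqrt (real k1) \<le> sqrt (real n) * sqrt T" by (simp add: real_sqrt_mult[symmetric])
      then have "sqrt (real k1) / sqrt (real n) \<le> sqrt T" using np by (simp add: divide_le_eq mult.commute)
      then have "4 * C * (sqrt (real k1) / sqrt (real n)) \<le> 4 * C * sqrt T" using C by (intro mult_left_mono) auto
      moreover have "C / sqrt (real n) * (4 * sqrt (real k1)) = 4 * C * (sqrt (real k1) / sqrt (real n))" by simp
      ultimately show ?thesis by linarith
    qed
    finally show ?thesis unfolding R_def by linarith
  qed
  have xsq: "integral\<^sup>L M (\<lambda>w. (x w)\<^sup>2) \<le> C1 / sqrt (real n)"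
  proof -
    have "integral\<^sup>L M (\<lambda>\<omega>. (W (1/real n) \<omega> - W (1/real n - 1/real n) \<omega>)\<^sup>2) \<le> C1 * (1/real n) powr (1/2)"
      using np nT by (intro ci) (simp add: field_simps)
    then show ?thesis unfolding x_def using np by (simp add: powr_half_sqrt real_sqrt_divide)
  qed
  have "(\<Sum>k\<in>K. (integral\<^sup>L M (\<lambda>w. x w * y k w))\<^sup>2) \<le> R * integral\<^sup>L M (\<lambda>w. (x w)\<^sup>2)"
  proof (rule bessel)
    show "finite K" unfolding K_def by simp
    show "x \<in> borel_measurable M" unfolding x_def by (rule inc_meas[OF cgp]) auto
    show "y i \<in> borel_measurable M" for i unfolding y_def by (rule inc_meas[OF cgp]) auto
    show "integrable M (\<lambda>w. (x w)\<^sup>2)" unfolding x_def by (rule inc_sq[OF cgp]) auto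
    show "integrable M (\<lambda>w. (y i w)\<^sup>2)" for i unfolding y_def by (rule inc_sq[OF cgp]) auto
  qed (use R row in auto)
  also have "\<dots> \<le> R * (C1 / sqrt (real n))" using R xsq by (intro mult_left_mono) auto
  finally show ?thesis unfolding K_def x_def y_def R_def beta_n_def by simp
qed


lemma G_bound:
  assumes ci: "\<And>s t. 0 < s \<and> s \<le> t \<and> t \<le> T \<Longrightarrow>
      integral\<^sup>L M (\<lambda>\<omega>. (W t \<omega> - W (t - s) \<omega>)\<^sup>2) \<le> C1 * s powr (1/2)"
    and cii: "\<And>s r t. 0 < s \<and> 2 * s \<le> r \<and> r \<le> T \<and> 2 * s \<le> t \<and> t \<le> T \<and> \<bar>t - r\<bar> \<ge> 2 * s \<Longrightarrow>
        \<bar>integral\<^sup>L M (\<lambda>\<omega>. (W t \<omega> - W (t - s) \<omega>) * (W r \<omega> - W (r - s) \<omega>))\<bar>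
          \<le> C * s\<^sup>2 * \<bar>t - r\<bar> powr (-\<alpha>) * (min t r - s) powr (-(3/2 - \<alpha>))
             + C * s\<^sup>2 * \<bar>t - r\<bar> powr (-(3/2))"
    and C: "C > 0" and C1: "C1 > 0" and al: "1 < \<alpha>" "\<alpha> \<le> 3/2"
    and n: "n \<ge> 1" and pq: "p \<in> {1,2}" "q \<in> {1,2}" and T: "T > 0"
    and j1: "1 \<le> j1" and jk: "j1 \<le> k0" and j1T: "2 * real j1 \<le> real n * T" and k1T: "2 * real k1 \<le> real n * T"
    and nT: "1 \<le> real n * T"
  shows "(\<Sum>j\<in>{j0+1..j1}. \<Sum>k\<in>{k0+1..k1}. (beta_n M W n (2*j-p) (2*k-q))\<^sup>2)
     \<le> (4 * (C1\<^sup>2 + 4 * C\<^sup>2) * sqrt T + (C1 + 4 * C * sqrt T) * C1) / sqrt (real n)"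
proof -
  define f where "f j = (\<Sum>k\<in>{k0+1..k1}. (beta_n M W n (2*j-p) (2*k-q))\<^sup>2)" for j
  define Z where "Z = (\<Sum>k\<in>{k0+1..k1}. (beta_n M W n 0 (2*k-q))\<^sup>2)"
  define A where "A = {j0+1..j1}"
  define B where "B = {j. 1 \<le> 2*j-p}"
  have "(\<Sum>j\<in>A. f j) = (\<Sum>j\<in>A \<inter> B. f j) + (\<Sum>j\<in>A - B. f j)"
    by (rule sum.Int_Diff) (simp add: A_def)
  also have "A \<inter> B = {j\<in>{j0+1..j1}. 1 \<le> 2*j-p}" unfolding A_def B_def by auto
  also have "(\<Sum>j\<in>{j\<in>{j0+1..j1}. 1 \<le> 2*j-p}. f j) \<le> 4 * (C1\<^sup>2 + 4 * C\<^sup>2) * sqrt T / sqrt (real n)"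
    unfolding f_def by (rule main_rows[OF ci cii C C1 al n pq T jk j1T k1T])
  also have "(\<Sum>j\<in>A - B. f j) \<le> (C1 + 4 * C * sqrt T) * (C1 / sqrt (real n))"
  proof -
    have sub: "A - B \<subseteq> {1}" unfolding A_def B_def using pq by auto
    have "(\<Sum>j\<in>A - B. f j) = (\<Sum>j\<in>A - B. Z)"
    proof (rule sum.cong)
      fix j assume "j \<in> A - B"
      then have "2*j-p = 0" unfolding B_def by (simp add: not_le)
      then show "f j = Z" unfolding f_def Z_def by simp
    qed simp
    also have "\<dots> = real (card (A - B)) * Z" by simp
    also have "\<dots> \<le> 1 * Z"
    proof (rule mult_right_mono)
      have "card (A - B) \<le> card {1::nat}" by (rule card_mono[OF _ sub]) simp
      then show "real (card (A - B)) \<le> 1" by simp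
      show "0 \<le> Z" unfolding Z_def by (intro sum_nonneg) simp
    qed
    also have "\<dots> \<le> (C1 + 4 * C * sqrt T) * (C1 / sqrt (real n))"
    proof -
      have "1 \<le> k0" using jk j1 by simp
      from zero_row[OF ci cii C C1 al n pq(2) T this k1T nT] show ?thesis unfolding Z_def by simp
    qed
    finally show ?thesis .
  qed
  finally show ?thesis unfolding f_def A_def by (simp add: add_divide_distrib)
qed

end

theorem lemma6p1:
  fixes M :: "'a measure" and W :: "real \<Rightarrow> 'a \<Rightarrow> real"
    and T t0 t1 t2 t3 :: real
  assumes "centered_gaussian_process M W"
    and "cond_i M W T" and "cond_ii M W T" and "cond_iv M W T"
    and "0 \<le> t0" and "t0 < t1" and "t1 \<le> t2" and "t2 < t3" and "t3 \<le> T"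
  shows "(\<lambda>n::nat.
      \<Sum>j\<in>{nat \<lfloor>real n * t0 / 2\<rfloor> + 1 .. nat \<lfloor>real n * t1 / 2\<rfloor>}.
      \<Sum>k\<in>{nat \<lfloor>real n * t2 / 2\<rfloor> + 1 .. nat \<lfloor>real n * t3 / 2\<rfloor>}.
        \<bar>(beta_n M W n (2*j-1) (2*k-1))\<^sup>2 - (beta_n M W n (2*j-1) (2*k-2))\<^sup>2
         - (beta_n M W n (2*j-2) (2*k-1))\<^sup>2 + (beta_n M W n (2*j-2) (2*k-2))\<^sup>2\<bar>)
     \<longlonglongrightarrow> 0"
proof -
  note cgp = assms(1)
  obtain C1 where C1: "C1 > 0" and ci0: "\<forall>s t. 0 < s \<and> s \<le> t \<and> t \<le> T \<longrightarrow>
      integral\<^sup>L M (\<lambda>\<omega>. (W t \<omega> - W (t - s) \<omega>)\<^sup>2) \<le> C1 * s powr (1/2)"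
    using assms(2) unfolding cond_i_def by blast
  have ci: "\<And>s t. 0 < s \<and> s \<le> t \<and> t \<le> T \<Longrightarrow>
      integral\<^sup>L M (\<lambda>\<omega>. (W t \<omega> - W (t - s) \<omega>)\<^sup>2) \<le> C1 * s powr (1/2)" using ci0 by blast
  obtain C \<alpha> where C: "C > 0" and al: "1 < \<alpha>" "\<alpha> \<le> 3/2" and cii0:
     "\<forall>s r t. 0 < s \<and> 2 * s \<le> r \<and> r \<le> T \<and> 2 * s \<le> t \<and> t \<le> T \<and> \<bar>t - r\<bar> \<ge> 2 * s \<longrightarrow>
        \<bar>integral\<^sup>L M (\<lambda>\<omega>. (W t \<omega> - W (t - s) \<omega>) * (W r \<omega> - W (r - s) \<omega>))\<bar>
          \<le> C * s\<^sup>2 * \<bar>t - r\<bar> powr (-\<alpha>) * (min t r - s) powr (-(3/2 - \<alpha>))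
             + C * s\<^sup>2 * \<bar>t - r\<bar> powr (-(3/2))"
    using assms(3) unfolding cond_ii_def by blast
  have cii: "\<And>s r t. 0 < s \<and> 2 * s \<le> r \<and> r \<le> T \<and> 2 * s \<le> t \<and> t \<le> T \<and> \<bar>t - r\<bar> \<ge> 2 * s \<Longrightarrow>
        \<bar>integral\<^sup>L M (\<lambda>\<omega>. (W t \<omega> - W (t - s) \<omega>) * (W r \<omega> - W (r - s) \<omega>))\<bar>
          \<le> C * s\<^sup>2 * \<bar>t - r\<bar> powr (-\<alpha>) * (min t r - s) powr (-(3/2 - \<alpha>))
             + C * s\<^sup>2 * \<bar>t - r\<bar> powr (-(3/2))" using cii0 by blast
  have t1p: "t1 > 0" using assms(5,6) by linarith
  have T: "T > 0" using assms by linarith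
  define c where "c = 4 * ((4 * (C1\<^sup>2 + 4 * C\<^sup>2) * sqrt T + (C1 + 4 * C * sqrt T) * C1))"
  define F where "F n = (\<Sum>j\<in>{nat \<lfloor>real n * t0 / 2\<rfloor> + 1 .. nat \<lfloor>real n * t1 / 2\<rfloor>}.
      \<Sum>k\<in>{nat \<lfloor>real n * t2 / 2\<rfloor> + 1 .. nat \<lfloor>real n * t3 / 2\<rfloor>}.
        \<bar>(beta_n M W n (2*j-1) (2*k-1))\<^sup>2 - (beta_n M W n (2*j-1) (2*k-2))\<^sup>2
         - (beta_n M W n (2*j-2) (2*k-1))\<^sup>2 + (beta_n M W n (2*j-2) (2*k-2))\<^sup>2\<bar>)" for n :: nat
  have natfl: "2 * real (nat \<lfloor>x / 2\<rfloor>) \<le> x" if "x \<ge> 0" for x :: real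
  proof -
    have "real (nat \<lfloor>x / 2\<rfloor>) = real_of_int \<lfloor>x / 2\<rfloor>" using that by simp
    also have "\<dots> \<le> x / 2" by (rule of_int_floor_le)
    finally show ?thesis by linarith
  qed
  have bound: "F n \<le> c / sqrt (real n)" if nt: "real n * t1 \<ge> 2" for n :: nat
  proof -
    define j0 where "j0 = nat \<lfloor>real n * t0 / 2\<rfloor>"
    define j1 where "j1 = nat \<lfloor>real n * t1 / 2\<rfloor>"
    define k0 where "k0 = nat \<lfloor>real n * t2 / 2\<rfloor>"
    define k1 where "k1 = nat \<lfloor>real n * t3 / 2\<rfloor>"
    have n: "n \<ge> 1" using nt t1p by (cases n) auto
    have rn: "real n \<ge> 0" by simp
    have nT: "1 \<le> real n * T"
    proof -
      have "real n * t1 \<le> real n * T" using assms by (intro mult_left_mono) auto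
      then show ?thesis using nt by linarith
    qed
    have j1: "1 \<le> j1" unfolding j1_def using nt by (simp add: le_nat_iff le_floor_iff)
    have jk: "j1 \<le> k0" unfolding j1_def k0_def using assms
      by (intro nat_mono floor_mono divide_right_mono mult_left_mono) auto
    have j1T: "2 * real j1 \<le> real n * T"
    proof -
      have "2 * real j1 \<le> real n * t1" unfolding j1_def using natfl[of "real n * t1"] t1p by simp
      also have "\<dots> \<le> real n * T" using assms by (intro mult_left_mono) auto
      finally show ?thesis .
    qed
    have k1T: "2 * real k1 \<le> real n * T"
    proof -
      have "2 * real k1 \<le> real n * t3" unfolding k1_def using natfl[of "real n * t3"] t1p assms by simp
      also have "\<dots> \<le> real n * T" using assms by (intro mult_left_mono) auto
      finally show ?thesis .
    qed
    define G where "G p q = (\<Sum>j\<in>{j0+1..j1}. \<Sum>k\<in>{k0+1..k1}. (beta_n M W n (2*j-p) (2*k-q))\<^sup>2)" for p q :: nat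
    define B where "B = (4 * (C1\<^sup>2 + 4 * C\<^sup>2) * sqrt T + (C1 + 4 * C * sqrt T) * C1) / sqrt (real n)"
    have Gb: "G p q \<le> B" if "p \<in> {1,2}" "q \<in> {1,2}" for p q
      unfolding G_def B_def by (rule G_bound[OF cgp ci cii C C1 al n that T j1 jk j1T k1T nT])
    have "F n \<le> (\<Sum>j\<in>{j0+1..j1}. \<Sum>k\<in>{k0+1..k1}.
        (beta_n M W n (2*j-1) (2*k-1))\<^sup>2 + (beta_n M W n (2*j-1) (2*k-2))\<^sup>2
         + (beta_n M W n (2*j-2) (2*k-1))\<^sup>2 + (beta_n M W n (2*j-2) (2*k-2))\<^sup>2)"
      unfolding F_def j0_def j1_def k0_def k1_def
    proof (intro sum_mono)
      fix j k
      show "\<bar>(beta_n M W n (2*j-1) (2*k-1))\<^sup>2 - (beta_n M W n (2*j-1) (2*k-2))\<^sup>2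
         - (beta_n M W n (2*j-2) (2*k-1))\<^sup>2 + (beta_n M W n (2*j-2) (2*k-2))\<^sup>2\<bar>
         \<le> (beta_n M W n (2*j-1) (2*k-1))\<^sup>2 + (beta_n M W n (2*j-1) (2*k-2))\<^sup>2
         + (beta_n M W n (2*j-2) (2*k-1))\<^sup>2 + (beta_n M W n (2*j-2) (2*k-2))\<^sup>2"
        using zero_le_power2[of "beta_n M W n (2*j-1) (2*k-1)"] zero_le_power2[of "beta_n M W n (2*j-1) (2*k-2)"]
          zero_le_power2[of "beta_n M W n (2*j-2) (2*k-1)"] zero_le_power2[of "beta_n M W n (2*j-2) (2*k-2)"]
        by (simp only: abs_le_iff) linarith
    qed
    also have "\<dots> = G 1 1 + G 1 2 + G 2 1 + G 2 2"
      unfolding G_def by (simp add: sum.distrib)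
    also have "\<dots> \<le> B + B + B + B" using Gb by (intro add_mono) auto
    also have "\<dots> = c / sqrt (real n)" unfolding B_def c_def by simp
    finally show ?thesis .
  qed
  have ev: "eventually (\<lambda>n. F n \<le> c / sqrt (real n)) sequentially"
  proof -
    have "eventually (\<lambda>n::nat. real n * t1 \<ge> 2) sequentially"
      using t1p by real_asymp
    then show ?thesis by (rule eventually_mono) (rule bound)
  qed
  have ev0: "eventually (\<lambda>n. 0 \<le> F n) sequentially"
    unfolding F_def by (intro always_eventually allI sum_nonneg) auto
  have lim: "(\<lambda>n::nat. c / sqrt (real n)) \<longlonglongrightarrow> 0" by real_asymp
  have "F \<longlonglongrightarrow> 0" by (rule tendsto_sandwich[OF ev0 ev tendsto_const lim])
  then show ?thesis unfolding F_def .
qed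

end
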